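(* Let $G$ be a countable infinite discrete group, $X$ an infinite compact Hausdorff space and $\beta: G\curvearrowright X$ a minimal, topologically free continuous action with no $G$-invariant regular Borel probability measure and with dynamical comparison. Let $Y$ be a compact Hausdorff space and $\alpha: G\curvearrowright X\times Y$ the action $\alpha_g(x,y)=(\beta_g(x),y)$. Then $\alpha$ has paradoxical comparison.
   Context: Subequivalence for an action of $G$ on a space $Z$: for closed $F$ and open $O$ in $Z$, $F\prec O$ if there exist a finite open cover $\mathcal{U}$ of $F$ and $s_U\in G$ with the sets $s_UU$ pairwise disjoint subsets of $O$; for open $V$, $V\prec O$ means $F\prec O$ for all closed $F\subset V$. Dynamical comparison (for $\beta$): $V\prec O$ for every open $V$ and nonempty open $O$ in $X$ with $\mu(V)<\mu(O)$ for all $G$-invariant regular Borel probability measures $\mu$. Topologically free: fixed point sets of non-identity elements have empty interior. Paradoxical comparison (for $\alpha$): for every nonempty open $O\subset X\times Y$ and closed $F\subset O$ there are disjoint nonempty open $O_1,O_2\subset O$ with $F\prec O_1$, $F\prec O_2$. *)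

theory Defs
  imports "HOL-Probability.Probability"
begin

text \<open>Group actions of a group (type class group_add, written additively, not
assumed commutative) on a topological space by homeomorphisms.\<close>

definition continuous_action :: "('g::group_add \<Rightarrow> 'a::topological_space \<Rightarrow> 'a) \<Rightarrow> bool" where
  "continuous_action act \<longleftrightarrow>
     act 0 = id \<and> (\<forall>g h. act (g + h) = act g \<circ> act h) \<and> (\<forall>g. continuous_on UNIV (act g))"

definition minimal_action :: "('g::group_add \<Rightarrow> 'a::topological_space \<Rightarrow> 'a) \<Rightarrow> bool" where
  "minimal_action act \<longleftrightarrow> (\<forall>x. closure (range (\<lambda>g. act g x)) = UNIV)"

definition topologically_free :: "('g::group_add \<Rightarrow> 'a::topological_space \<Rightarrow> 'a) \<Rightarrow> bool" where
  "topologically_free act \<longleftrightarrow> (\<forall>g. g \<noteq> 0 \<longrightarrow> interior {x. act g x = x} = {})"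

definition regular_borel_prob :: "'a::topological_space measure \<Rightarrow> bool" where
  "regular_borel_prob M \<longleftrightarrow> sets M = sets borel \<and> prob_space M \<and>
     (\<forall>A \<in> sets borel.
        measure M A = (INF U \<in> {U. open U \<and> A \<subseteq> U}. measure M U) \<and>
        measure M A = (SUP K \<in> {K. compact K \<and> K \<subseteq> A}. measure M K))"

definition invariant_measure :: "('g \<Rightarrow> 'a::topological_space \<Rightarrow> 'a) \<Rightarrow> 'a measure \<Rightarrow> bool" where
  "invariant_measure act M \<longleftrightarrow> (\<forall>g. \<forall>A \<in> sets borel. measure M (act g -` A) = measure M A)"

definition inv_reg_prob :: "('g \<Rightarrow> 'a::topological_space \<Rightarrow> 'a) \<Rightarrow> 'a measure \<Rightarrow> bool" where
  "inv_reg_prob act M \<longleftrightarrow> regular_borel_prob M \<and> invariant_measure act M"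

definition subeq_closed :: "('g \<Rightarrow> 'a \<Rightarrow> 'a::topological_space) \<Rightarrow> 'a set \<Rightarrow> 'a set \<Rightarrow> bool" where
  "subeq_closed act F W \<longleftrightarrow>
     (\<exists>Us (s :: 'a set \<Rightarrow> 'g). finite Us \<and> (\<forall>U\<in>Us. open U) \<and> F \<subseteq> \<Union>Us \<and>
        (\<forall>U\<in>Us. act (s U) ` U \<subseteq> W) \<and>
        (\<forall>U\<in>Us. \<forall>U'\<in>Us. U \<noteq> U' \<longrightarrow> act (s U) ` U \<inter> act (s U') ` U' = {}))"

definition subeq_open :: "('g \<Rightarrow> 'a \<Rightarrow> 'a::topological_space) \<Rightarrow> 'a set \<Rightarrow> 'a set \<Rightarrow> bool" where
  "subeq_open act V W \<longleftrightarrow> (\<forall>F. closed F \<and> F \<subseteq> V \<longrightarrow> subeq_closed act F W)"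

definition dynamical_comparison :: "('g \<Rightarrow> 'a \<Rightarrow> 'a::topological_space) \<Rightarrow> bool" where
  "dynamical_comparison act \<longleftrightarrow>
     (\<forall>V W. open V \<and> open W \<and> W \<noteq> {} \<and>
        (\<forall>M. inv_reg_prob act M \<longrightarrow> measure M V < measure M W) \<longrightarrow> subeq_open act V W)"

definition paradoxical_comparison :: "('g \<Rightarrow> 'a \<Rightarrow> 'a::topological_space) \<Rightarrow> bool" where
  "paradoxical_comparison act \<longleftrightarrow>
     (\<forall>W F. open W \<and> W \<noteq> {} \<and> closed F \<and> F \<subseteq> W \<longrightarrow>
        (\<exists>W1 W2. open W1 \<and> open W2 \<and> W1 \<noteq> {} \<and> W2 \<noteq> {} \<and> W1 \<subseteq> W \<and> W2 \<subseteq> W \<and>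
           W1 \<inter> W2 = {} \<and> subeq_closed act F W1 \<and> subeq_closed act F W2))"

end

theory Submission
  imports Defs
begin

lemma subeq_closed_idx:
  assumes "finite J" "\<forall>j\<in>J. open (V j)" "F \<subseteq> (\<Union>j\<in>J. V j)"
    "\<forall>j\<in>J. act (t j) ` V j \<subseteq> W"
    "\<forall>i\<in>J. \<forall>j\<in>J. i \<noteq> j \<longrightarrow> act (t i) ` V i \<inter> act (t j) ` V j = {}"
  shows "subeq_closed act F W"
proof -
  define s where "s = (\<lambda>U. t (SOME j. j \<in> J \<and> V j = U))"
  have sj: "\<And>U. U \<in> V ` J \<Longrightarrow> \<exists>j\<in>J. V j = U \<and> s U = t j"
    unfolding s_def by (metis (mono_tags, lifting) imageE someI)
  show ?thesis unfolding subeq_closed_def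
  proof (intro exI[of _ "V ` J"] exI[of _ s] conjI ballI impI)
    show "finite (V ` J)" using assms(1) by simp
    show "\<And>U. U \<in> V ` J \<Longrightarrow> open U" using assms(2) by auto
    show "F \<subseteq> \<Union> (V ` J)" using assms(3) by simp
    show "\<And>U. U \<in> V ` J \<Longrightarrow> act (s U) ` U \<subseteq> W" using sj assms(4) by metis
    fix U U' assume "U \<in> V ` J" "U' \<in> V ` J" "U \<noteq> U'"
    then obtain i j where "i \<in> J" "j \<in> J" "V i = U" "s U = t i" "V j = U'" "s U' = t j"
      using sj by metis
    then show "act (s U) ` U \<inter> act (s U') ` U' = {}" using assms(5) \<open>U \<noteq> U'\<close> by metis
  qed
qed

lemma perfect_space_action:
  fixes \<beta> :: "'g::group_add \<Rightarrow> 'x::t2_space \<Rightarrow> 'x"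
    and U :: "'x set"
  assumes "compact (UNIV :: 'x set)" "infinite (UNIV :: 'x set)"
    "continuous_action \<beta>" "minimal_action \<beta>" "open U" "U \<noteq> {}"
  shows "infinite U"
proof
  assume fU: "finite U"
  obtain x where x: "x \<in> U" using assms(6) by auto
  have "closed (U - {x})" by (intro finite_imp_closed) (use fU in auto)
  then have ox: "open {x}"
  proof -
    have "{x} = U - (U - {x})" using x by auto
    then show ?thesis using open_Diff[OF assms(5) \<open>closed (U - {x})\<close>] by simp
  qed
  have act: "\<beta> 0 = id" "\<And>g h. \<beta> (g + h) = \<beta> g \<circ> \<beta> h" "\<And>g. continuous_on UNIV (\<beta> g)"
    using assms(3) unfolding continuous_action_def by auto
  have single: "open {y}" for y :: 'x
  proof -
    have "x \<in> closure (range (\<lambda>g. \<beta> g y))" using assms(4) unfolding minimal_action_def by auto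
    then have "{x} \<inter> range (\<lambda>g. \<beta> g y) \<noteq> {}"
      using open_Int_closure_eq_empty[OF ox, of "range (\<lambda>g. \<beta> g y)"] by blast
    then obtain g where g: "\<beta> g y = x" by blast
    have "\<beta> g -` {x} = {y}"
    proof -
      have "z = y" if "\<beta> g z = x" for z
      proof -
        have "\<beta> (-g) (\<beta> g z) = \<beta> (-g) (\<beta> g y)" using g that by simp
        moreover have "\<beta> (-g) \<circ> \<beta> g = id" using act(1) act(2)[of "-g" g] by simp
        ultimately show "z = y" by (metis comp_apply id_apply)
      qed
      then show ?thesis using g by blast
    qed
    moreover have "open (\<beta> g -` {x})"
      using continuous_on_open_vimage[OF open_UNIV, of "\<beta> g"] act(3)[of g] ox by simp
    ultimately show ?thesis by simp
  qed
  have cov: "(UNIV::'x set) \<subseteq> (\<Union>c\<in>UNIV. {c})" by blast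
  obtain C where "finite C" "(UNIV::'x set) \<subseteq> (\<Union>c\<in>C. {c})"
    using compactE_image[OF assms(1), of UNIV "\<lambda>c. {c}", OF single cov] by metis
  then have "(UNIV::'x set) \<subseteq> C" by blast
  then show False using assms(2) \<open>finite C\<close> by (metis finite_subset)
qed

lemma disjoint_refine:
  fixes A :: "'i \<Rightarrow> 'x::t2_space set"
  assumes perf: "\<And>U::'x set. open U \<Longrightarrow> U \<noteq> {} \<Longrightarrow> infinite U"
    and "finite I" and "\<forall>i\<in>I. open (A i) \<and> A i \<noteq> {}"
  shows "\<exists>C. \<forall>i\<in>I. open (C i) \<and> C i \<noteq> {} \<and> C i \<subseteq> A i \<and> (\<forall>j\<in>I. i \<noteq> j \<longrightarrow> C i \<inter> C j = {})"
  using assms(2,3)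
proof (induction I rule: finite_induct)
  case empty
  show ?case by simp
next
  case (insert k I)
  then obtain C where C: "\<forall>i\<in>I. open (C i) \<and> C i \<noteq> {} \<and> C i \<subseteq> A i \<and> (\<forall>j\<in>I. i \<noteq> j \<longrightarrow> C i \<inter> C j = {})"
    by auto
  obtain q where q: "q \<in> A k" using insert.prems by auto
  have "\<forall>i\<in>I. \<exists>c. c \<in> C i \<and> c \<noteq> q"
  proof
    fix i assume "i \<in> I"
    then have "infinite (C i)" using C perf by auto
    then have "\<not> C i \<subseteq> {q}" using finite_subset by blast
    then show "\<exists>c. c \<in> C i \<and> c \<noteq> q" by blast
  qed
  then obtain c where c: "\<forall>i\<in>I. c i \<in> C i \<and> c i \<noteq> q" by metis
  have "\<forall>i\<in>I. \<exists>UV. open (fst UV) \<and> open (snd UV) \<and> q \<in> fst UV \<and> c i \<in> snd UV \<and> fst UV \<inter> snd UV = {}"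
  proof
    fix i assume "i \<in> I"
    then have "q \<noteq> c i" using c by auto
    then obtain U V where "open U" "open V" "q \<in> U" "c i \<in> V" "U \<inter> V = {}"
      using hausdorff[OF \<open>q \<noteq> c i\<close>] by blast
    then show "\<exists>UV. open (fst UV) \<and> open (snd UV) \<and> q \<in> fst UV \<and> c i \<in> snd UV \<and> fst UV \<inter> snd UV = {}"
      by (intro exI[of _ "(U, V)"]) auto
  qed
  then obtain UV where UV: "\<forall>i\<in>I. open (fst (UV i)) \<and> open (snd (UV i)) \<and> q \<in> fst (UV i) \<and> c i \<in> snd (UV i) \<and> fst (UV i) \<inter> snd (UV i) = {}"
    by metis
  define C' where "C' = (\<lambda>i. if i = k then A k \<inter> (\<Inter>j\<in>I. fst (UV j)) else C i \<inter> snd (UV i))"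
  have "\<forall>i\<in>insert k I. open (C' i) \<and> C' i \<noteq> {} \<and> C' i \<subseteq> A i"
  proof
    fix i assume i: "i \<in> insert k I"
    show "open (C' i) \<and> C' i \<noteq> {} \<and> C' i \<subseteq> A i"
    proof (cases "i = k")
      case True
      have "open (\<Inter>j\<in>I. fst (UV j))" using UV insert.hyps(1) by (intro open_INT) auto
      moreover have "q \<in> C' i" using True q UV unfolding C'_def by auto
      ultimately show ?thesis using True insert.prems unfolding C'_def by auto
    next
      case False
      then have "i \<in> I" using i by auto
      then show ?thesis using False C UV c unfolding C'_def by auto
    qed
  qed
  moreover have "\<forall>i\<in>insert k I. \<forall>j\<in>insert k I. i \<noteq> j \<longrightarrow> C' i \<inter> C' j = {}"
  proof (intro ballI impI)
    fix i j assume i: "i \<in> insert k I" and j: "j \<in> insert k I" and ij: "i \<noteq> j"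
    have kk: "C' k \<inter> C' l = {}" if "l \<in> I" for l
    proof -
      have "l \<noteq> k" using that insert.hyps(2) by auto
      then have "C' l \<subseteq> snd (UV l)" "C' k \<subseteq> fst (UV l)" using that unfolding C'_def by auto
      then show ?thesis using UV that by blast
    qed
    show "C' i \<inter> C' j = {}"
    proof (cases "i = k")
      case True
      then show ?thesis using kk j ij by auto
    next
      case False
      note iF = False
      show ?thesis
      proof (cases "j = k")
        case True
        then show ?thesis using kk[of i] i iF by auto
      next
        case False
        then have "i \<in> I" "j \<in> I" using i j iF by auto
        then show ?thesis using C ij iF False unfolding C'_def by auto
      qed
    qed
  qed
  ultimately show ?case by blast
qed


lemma alpha_image:
  assumes "\<And>g x y. \<alpha> g (x, y) = (\<beta> g x, y)"
  shows "\<alpha> g ` (U \<times> B) = \<beta> g ` U \<times> B"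
proof
  show "\<alpha> g ` (U \<times> B) \<subseteq> \<beta> g ` U \<times> B" using assms by auto
  show "\<beta> g ` U \<times> B \<subseteq> \<alpha> g ` (U \<times> B)"
  proof
    fix z assume "z \<in> \<beta> g ` U \<times> B"
    then obtain x y where "z = (\<beta> g x, y)" "x \<in> U" "y \<in> B" by auto
    then have "z = \<alpha> g (x, y)" "(x, y) \<in> U \<times> B" using assms by auto
    then show "z \<in> \<alpha> g ` (U \<times> B)" by blast
  qed
qed

theorem proposition5p2:
  fixes \<beta> :: "'g::{group_add, countable} \<Rightarrow> 'x::t2_space \<Rightarrow> 'x"
    and \<alpha> :: "'g \<Rightarrow> 'x \<times> 'y::t2_space \<Rightarrow> 'x \<times> 'y"
  assumes "infinite (UNIV :: 'g set)"
    and "compact (UNIV :: 'x set)" and "infinite (UNIV :: 'x set)"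
    and "compact (UNIV :: 'y set)"
    and "continuous_action \<beta>"
    and "minimal_action \<beta>"
    and "topologically_free \<beta>"
    and "\<nexists>M. inv_reg_prob \<beta> M"
    and "dynamical_comparison \<beta>"
    and "\<And>g x y. \<alpha> g (x, y) = (\<beta> g x, y)"
  shows "paradoxical_comparison \<alpha>"
  unfolding paradoxical_comparison_def
proof (intro allI impI, elim conjE)
  fix W :: "('x \<times> 'y) set" and F
  assume W: "open W" "W \<noteq> {}" and F: "closed F" "F \<subseteq> W"
  have perf: "\<And>U::'x set. open U \<Longrightarrow> U \<noteq> {} \<Longrightarrow> infinite U"
    using perfect_space_action[OF assms(2,3,5,6)] by blast
  have cmp: "subeq_closed \<beta> UNIV D" if "open D" "D \<noteq> {}" for D :: "'x set"
  proof -
    have "subeq_open \<beta> UNIV D"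
      using assms(8,9) that unfolding dynamical_comparison_def by blast
    then show ?thesis unfolding subeq_open_def by simp
  qed
  define Bx where "Bx = {(A, B). open A \<and> open B \<and> A \<noteq> {} \<and> B \<noteq> {} \<and> (A::'x set) \<times> (B::'y set) \<subseteq> W}"
  have boxp: "\<exists>b\<in>Bx. p \<in> fst b \<times> snd b" if pW: "p \<in> W" for p
  proof -
    obtain A B where "open A" "open B" "p \<in> A \<times> B" "A \<times> B \<subseteq> W"
      using open_prod_elim[OF W(1) pW] by metis
    then show ?thesis unfolding Bx_def by (intro bexI[of _ "(A, B)"]) auto
  qed
  have "compact (UNIV :: ('x \<times> 'y) set)"
    using compact_Times[OF assms(2,4)] by simp
  then have cF: "compact F" using F(1) compact_Int_closed[of UNIV F] by simp
  have cov: "F \<subseteq> (\<Union>b\<in>Bx. fst b \<times> snd b)" using boxp F(2) by blast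
  have opb: "\<And>b. b \<in> Bx \<Longrightarrow> open (fst b \<times> snd b)" unfolding Bx_def by (auto intro: open_Times)
  obtain Bf where Bf: "Bf \<subseteq> Bx" "finite Bf" "F \<subseteq> (\<Union>b\<in>Bf. fst b \<times> snd b)"
    using compactE_image[OF cF, of Bx "\<lambda>b. fst b \<times> snd b", OF opb cov] by metis
  obtain p0 where "p0 \<in> W" using W(2) by auto
  then obtain b0 where b0: "b0 \<in> Bx" using boxp by blast
  define I where "I = insert b0 Bf"
  have I: "finite I" "I \<subseteq> Bx" using Bf b0 unfolding I_def by auto
  have Ibox: "open (fst b) \<and> open (snd b) \<and> fst b \<noteq> {} \<and> snd b \<noteq> {} \<and> fst b \<times> snd b \<subseteq> W"
    if bI: "b \<in> I" for b
  proof -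
    obtain A B where "b = (A, B)" by (cases b)
    then show ?thesis using bI I(2) unfolding Bx_def by auto
  qed
  have "finite (I \<times> (UNIV :: bool set))" using I(1) by simp
  moreover have "\<forall>i\<in>I \<times> (UNIV :: bool set). open (fst (fst i)) \<and> fst (fst i) \<noteq> {}"
    using Ibox by auto
  ultimately obtain C where C: "\<forall>i\<in>I \<times> (UNIV :: bool set). open (C i) \<and> C i \<noteq> {} \<and> C i \<subseteq> fst (fst i) \<and>
      (\<forall>j\<in>I \<times> (UNIV :: bool set). i \<noteq> j \<longrightarrow> C i \<inter> C j = {})"
    using disjoint_refine[OF perf, of "I \<times> (UNIV :: bool set)" "\<lambda>i. fst (fst i)"] by blast
  define Ot where "Ot = (\<lambda>t. \<Union>b\<in>I. C (b, t) \<times> snd b)"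
  have Ot_open: "open (Ot t)" for t
    unfolding Ot_def using C Ibox by (intro open_UN ballI open_Times) auto
  have Ot_ne: "Ot t \<noteq> {}" for t
  proof -
    have "b0 \<in> I" unfolding I_def by simp
    then have "C (b0, t) \<times> snd b0 \<noteq> {}" using C Ibox by auto
    then show ?thesis unfolding Ot_def using \<open>b0 \<in> I\<close> by blast
  qed
  have Ot_sub: "Ot t \<subseteq> W" for t
  proof -
    have "C (b, t) \<times> snd b \<subseteq> W" if "b \<in> I" for b
    proof -
      have "C (b, t) \<subseteq> fst b" using C that by auto
      then show ?thesis using Ibox[OF that] by blast
    qed
    then show ?thesis unfolding Ot_def by blast
  qed
  have Cdisj: "C (b, t) \<inter> C (b', t') = {}" if "b \<in> I" "b' \<in> I" "(b, t) \<noteq> (b', t')" for b b' t t'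
    using C that by blast
  have Ot_disj: "Ot True \<inter> Ot False = {}"
  proof -
    have "(C (b, True) \<times> snd b) \<inter> (C (b', False) \<times> snd b') = {}" if "b \<in> I" "b' \<in> I" for b b'
      using Cdisj[OF that, of True False] by blast
    then show ?thesis unfolding Ot_def by blast
  qed
  have Ot_sube: "subeq_closed \<alpha> F (Ot t)" for t
  proof -
    have "\<forall>b\<in>I. \<exists>Us s. finite Us \<and> (\<forall>U\<in>Us. open U) \<and> UNIV \<subseteq> \<Union>Us \<and>
        (\<forall>U\<in>Us. \<beta> (s U) ` U \<subseteq> C (b, t)) \<and>
        (\<forall>U\<in>Us. \<forall>U'\<in>Us. U \<noteq> U' \<longrightarrow> \<beta> (s U) ` U \<inter> \<beta> (s U') ` U' = {})"
    proof
      fix b assume "b \<in> I"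
      then have "open (C (b, t))" "C (b, t) \<noteq> {}" using C by auto
      then have "subeq_closed \<beta> UNIV (C (b, t))" by (rule cmp)
      then show "\<exists>Us s. finite Us \<and> (\<forall>U\<in>Us. open U) \<and> UNIV \<subseteq> \<Union>Us \<and>
        (\<forall>U\<in>Us. \<beta> (s U) ` U \<subseteq> C (b, t)) \<and>
        (\<forall>U\<in>Us. \<forall>U'\<in>Us. U \<noteq> U' \<longrightarrow> \<beta> (s U) ` U \<inter> \<beta> (s U') ` U' = {})"
        unfolding subeq_closed_def by simp
    qed
    then obtain Us where "\<forall>b\<in>I. \<exists>s. finite (Us b) \<and> (\<forall>U\<in>Us b. open U) \<and> UNIV \<subseteq> \<Union>(Us b) \<and>
        (\<forall>U\<in>Us b. \<beta> (s U) ` U \<subseteq> C (b, t)) \<and>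
        (\<forall>U\<in>Us b. \<forall>U'\<in>Us b. U \<noteq> U' \<longrightarrow> \<beta> (s U) ` U \<inter> \<beta> (s U') ` U' = {})"
      by (metis (no_types) bchoice)
    then obtain s where Us: "\<forall>b\<in>I. finite (Us b) \<and> (\<forall>U\<in>Us b. open U) \<and> UNIV \<subseteq> \<Union>(Us b) \<and>
        (\<forall>U\<in>Us b. \<beta> (s b U) ` U \<subseteq> C (b, t)) \<and>
        (\<forall>U\<in>Us b. \<forall>U'\<in>Us b. U \<noteq> U' \<longrightarrow> \<beta> (s b U) ` U \<inter> \<beta> (s b U') ` U' = {})"
      by (metis (no_types) bchoice)
    have UsF: "finite (Us b)" if "b \<in> I" for b using Us that by simp
    have UsO: "open U" if "b \<in> I" "U \<in> Us b" for b U using Us that by simp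
    have UsC: "UNIV \<subseteq> \<Union>(Us b)" if "b \<in> I" for b using Us that by simp
    have UsI: "\<beta> (s b U) ` U \<subseteq> C (b, t)" if "b \<in> I" "U \<in> Us b" for b U using Us that by simp
    have UsD: "\<beta> (s b U) ` U \<inter> \<beta> (s b U') ` U' = {}" if "b \<in> I" "U \<in> Us b" "U' \<in> Us b" "U \<noteq> U'" for b U U'
      using Us that by simp
    define J where "J = Sigma I Us"
    let ?V = "\<lambda>j::(('x set \<times> 'y set) \<times> 'x set). snd j \<times> snd (fst j)"
    let ?t = "\<lambda>j::(('x set \<times> 'y set) \<times> 'x set). s (fst j) (snd j)"
    show ?thesis
    proof (rule subeq_closed_idx[of J ?V F \<alpha> ?t])
      show "finite J" unfolding J_def using I(1) UsF by (intro finite_SigmaI) auto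
      show "\<forall>j\<in>J. open (?V j)" unfolding J_def using UsO Ibox by (auto intro!: open_Times)
      show "F \<subseteq> (\<Union>j\<in>J. ?V j)"
      proof
        fix p assume "p \<in> F"
        then obtain b where b: "b \<in> Bf" "p \<in> fst b \<times> snd b" using Bf(3) by blast
        then have bI: "b \<in> I" unfolding I_def by simp
        then obtain U where "U \<in> Us b" "fst p \<in> U" using UsC[OF bI] by blast
        then have "(b, U) \<in> J" "p \<in> ?V (b, U)" using b bI unfolding J_def by (auto simp: mem_Times_iff)
        then show "p \<in> (\<Union>j\<in>J. ?V j)" by blast
      qed
      show "\<forall>j\<in>J. \<alpha> (?t j) ` ?V j \<subseteq> Ot t"
      proof
        fix j assume "j \<in> J"
        obtain b U where jB: "j = (b, U)" by (cases j)
        have j: "j = (b, U)" "b \<in> I" "U \<in> Us b" using jB \<open>j \<in> J\<close> unfolding J_def by simp_all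
        have "\<alpha> (?t j) ` ?V j = \<beta> (s b U) ` U \<times> snd b"
          using j alpha_image[of \<alpha> \<beta>, OF assms(10)] by simp
        also have "\<dots> \<subseteq> C (b, t) \<times> snd b" using UsI[OF j(2,3)] by blast
        also have "\<dots> \<subseteq> Ot t" unfolding Ot_def using j by blast
        finally show "\<alpha> (?t j) ` ?V j \<subseteq> Ot t" .
      qed
      show "\<forall>i\<in>J. \<forall>j\<in>J. i \<noteq> j \<longrightarrow> \<alpha> (?t i) ` ?V i \<inter> \<alpha> (?t j) ` ?V j = {}"
      proof (intro ballI impI)
        fix i j assume "i \<in> J" "j \<in> J" "i \<noteq> j"
        obtain b U where iB: "i = (b, U)" by (cases i)
        obtain b' U' where jB: "j = (b', U')" by (cases j)
        have ij: "i = (b, U)" "b \<in> I" "U \<in> Us b" "j = (b', U')" "b' \<in> I" "U' \<in> Us b'"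
          using iB jB \<open>i \<in> J\<close> \<open>j \<in> J\<close> unfolding J_def by simp_all
        have eqs: "\<alpha> (?t i) ` ?V i = \<beta> (s b U) ` U \<times> snd b" "\<alpha> (?t j) ` ?V j = \<beta> (s b' U') ` U' \<times> snd b'"
          using ij alpha_image[of \<alpha> \<beta>, OF assms(10)] by simp_all
        have "\<beta> (s b U) ` U \<inter> \<beta> (s b' U') ` U' = {}"
        proof (cases "b = b'")
          case True
          then have "U \<noteq> U'" using \<open>i \<noteq> j\<close> ij by auto
          moreover have "U' \<in> Us b" using ij(6) True by simp
          ultimately have "\<beta> (s b U) ` U \<inter> \<beta> (s b U') ` U' = {}" using UsD[OF ij(2,3)] by simp
          then show ?thesis using True by simp
        next
          case False
          have s1: "\<beta> (s b U) ` U \<subseteq> C (b, t)" using UsI[OF ij(2,3)] .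
          have s2: "\<beta> (s b' U') ` U' \<subseteq> C (b', t)" using UsI[OF ij(5,6)] .
          have "C (b, t) \<inter> C (b', t) = {}" using Cdisj[OF ij(2,5)] False by simp
          then show ?thesis using s1 s2 by blast
        qed
        then show "\<alpha> (?t i) ` ?V i \<inter> \<alpha> (?t j) ` ?V j = {}" unfolding eqs by (simp add: Times_Int_Times)
      qed
    qed
  qed
  show "\<exists>W1 W2. open W1 \<and> open W2 \<and> W1 \<noteq> {} \<and> W2 \<noteq> {} \<and> W1 \<subseteq> W \<and> W2 \<subseteq> W \<and>
           W1 \<inter> W2 = {} \<and> subeq_closed \<alpha> F W1 \<and> subeq_closed \<alpha> F W2"
    apply (rule exI[of _ "Ot True"], rule exI[of _ "Ot False"])
    using Ot_open Ot_ne Ot_sub Ot_disj Ot_sube by simp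
qed

end
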